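(* Let $r\geq 2$ and $n>r^{8}$. Every graph $G$ of order $n$ with $e(G)>t_r(n)$ has an induced subgraph $G'$ of order $n'>(1-1/r^{2})n$ such that either $$K_{r+1}\subseteq G'\quad\text{and}\quad\delta(G')>\left(\frac{r-1}{r}-\frac{1}{r^{2}(r^{2}-1)}\right)n',$$ or $$e(G')>\left(\frac{r-1}{2r}+\frac{1}{r^{4}(r^{2}-1)}\right)(n')^{2}.$$
   Context: All graphs are finite and simple; $e(G)$ is the number of edges and $\delta(G)$ the minimum degree. $T_r(n)$ denotes the Turán graph: the complete $r$-partite graph on $n$ vertices whose $r$ parts have sizes as equal as possible (differing by at most one); $t_r(n)=e(T_r(n))$. $K_{r+1}$ is the complete graph on $r+1$ vertices. *)

theory Defs
  imports Complex_Main
begin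

text \<open>A finite simple graph is given by a finite vertex set V and a symmetric,
irreflexive adjacency relation E; only adjacencies between vertices of V count.
The induced subgraph on U \<subseteq> V is (U, E).\<close>

definition simple_graph :: "'a set \<Rightarrow> ('a \<Rightarrow> 'a \<Rightarrow> bool) \<Rightarrow> bool" where
  "simple_graph V E \<longleftrightarrow> finite V \<and> (\<forall>x y. E x y \<longrightarrow> E y x) \<and> (\<forall>x. \<not> E x x)"

definition edges :: "'a set \<Rightarrow> ('a \<Rightarrow> 'a \<Rightarrow> bool) \<Rightarrow> 'a set set" where
  "edges V E = {{x, y} | x y. x \<in> V \<and> y \<in> V \<and> E x y}"

definition num_edges :: "'a set \<Rightarrow> ('a \<Rightarrow> 'a \<Rightarrow> bool) \<Rightarrow> nat" where
  "num_edges V E = card (edges V E)"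

definition degree :: "'a set \<Rightarrow> ('a \<Rightarrow> 'a \<Rightarrow> bool) \<Rightarrow> 'a \<Rightarrow> nat" where
  "degree V E v = card {u \<in> V. E v u}"

definition min_degree :: "'a set \<Rightarrow> ('a \<Rightarrow> 'a \<Rightarrow> bool) \<Rightarrow> nat" where
  "min_degree V E = Min ((degree V E) ` V)"

definition has_clique :: "'a set \<Rightarrow> ('a \<Rightarrow> 'a \<Rightarrow> bool) \<Rightarrow> nat \<Rightarrow> bool" where
  "has_clique V E k \<longleftrightarrow> (\<exists>S \<subseteq> V. card S = k \<and> (\<forall>x\<in>S. \<forall>y\<in>S. x \<noteq> y \<longrightarrow> E x y))"

text \<open>Turan graph T_r(n): vertices 0..n-1, vertex i in part (i mod r); parts have sizes
as equal as possible; edges join vertices in distinct parts.\<close>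
definition turan_adj :: "nat \<Rightarrow> nat \<Rightarrow> nat \<Rightarrow> bool" where
  "turan_adj r i j \<longleftrightarrow> i mod r \<noteq> j mod r"

definition turan_num :: "nat \<Rightarrow> nat \<Rightarrow> nat" where
  "turan_num r n = num_edges {0..<n} (turan_adj r)"

end

theory Submission
  imports Defs
begin

lemma edges_fin: "finite V \<Longrightarrow> finite (edges V E)"
proof -
  assume "finite V"
  have "edges V E \<subseteq> Pow V" unfolding edges_def by auto
  then show ?thesis using \<open>finite V\<close> finite_subset by blast
qed

lemma num_edges_insert:
  assumes sym: "\<forall>x y. E x y \<longrightarrow> E y x" and irr: "\<forall>x. \<not> E x x"
    and fin: "finite W" and v: "v \<notin> W"
  shows "num_edges (insert v W) E = num_edges W E + degree W E v"
proof -
  have eq: "edges (insert v W) E = edges W E \<union> (\<lambda>u. {v,u}) ` {u\<in>W. E v u}"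
  proof
    show "edges (insert v W) E \<subseteq> edges W E \<union> (\<lambda>u. {v,u}) ` {u\<in>W. E v u}"
    proof
      fix e assume "e \<in> edges (insert v W) E"
      then obtain x y where e: "e = {x,y}" "x \<in> insert v W" "y \<in> insert v W" "E x y"
        unfolding edges_def by blast
      show "e \<in> edges W E \<union> (\<lambda>u. {v,u}) ` {u\<in>W. E v u}"
      proof (cases "x = v")
        case True
        then have "y \<in> W" using e irr by auto
        then show ?thesis using e True by auto
      next
        case False
        show ?thesis
        proof (cases "y = v")
          case True
          then have "x \<in> W" "E v x" using e irr sym by auto
          moreover have "e = {v, x}" using e True by auto
          ultimately show ?thesis by auto
        next
          case False
          then show ?thesis using e \<open>x \<noteq> v\<close> unfolding edges_def by auto
        qed
      qed
    qed
  next
    show "edges W E \<union> (\<lambda>u. {v,u}) ` {u\<in>W. E v u} \<subseteq> edges (insert v W) E"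
      unfolding edges_def by auto
  qed
  have disj: "edges W E \<inter> (\<lambda>u. {v,u}) ` {u\<in>W. E v u} = {}"
    unfolding edges_def using v by (auto simp: doubleton_eq_iff)
  have inj: "inj_on (\<lambda>u. {v,u}) {u\<in>W. E v u}"
    using v by (auto simp: inj_on_def doubleton_eq_iff)
  have "card (edges (insert v W) E) = card (edges W E) + card ((\<lambda>u. {v,u}) ` {u\<in>W. E v u})"
    unfolding eq using disj fin by (intro card_Un_disjoint) (auto simp: edges_fin)
  also have "card ((\<lambda>u. {v,u}) ` {u\<in>W. E v u}) = degree W E v"
    unfolding degree_def using inj by (simp add: card_image)
  finally show ?thesis unfolding num_edges_def .
qed

lemma degree_Un:
  assumes "finite A" "finite B" "A \<inter> B = {}"
  shows "degree (A \<union> B) E b = degree A E b + degree B E b"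
proof -
  have "{u \<in> A \<union> B. E b u} = {u\<in>A. E b u} \<union> {u\<in>B. E b u}" by auto
  then show ?thesis unfolding degree_def using assms
    by (simp add: card_Un_disjoint disjoint_iff)
qed

lemma num_edges_Un:
  assumes sym: "\<forall>x y. E x y \<longrightarrow> E y x" and irr: "\<forall>x. \<not> E x x"
    and "finite A" "finite B" "A \<inter> B = {}"
  shows "num_edges (A \<union> B) E = num_edges A E + num_edges B E + (\<Sum>b\<in>B. degree A E b)"
  using assms(4,5)
proof (induction B rule: finite_induct)
  case empty
  then show ?case by (simp add: num_edges_def edges_def)
next
  case (insert b B)
  have "num_edges (A \<union> insert b B) E = num_edges (insert b (A \<union> B)) E" by simp
  also have "\<dots> = num_edges (A \<union> B) E + degree (A \<union> B) E b"
    using insert assms by (intro num_edges_insert) auto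
  also have "degree (A \<union> B) E b = degree A E b + degree B E b"
    using insert assms by (intro degree_Un) auto
  also have "num_edges (insert b B) E = num_edges B E + degree B E b"
    using insert assms by (intro num_edges_insert) auto
  ultimately show ?case using insert by simp
qed

lemma num_edges_triv:
  assumes sym: "\<forall>x y. E x y \<longrightarrow> E y x" and irr: "\<forall>x. \<not> E x x" and "finite A"
  shows "num_edges A E \<le> (\<Sum>j<card A. j)"
  using assms(3)
proof (induction A rule: finite_induct)
  case empty
  then show ?case by (simp add: num_edges_def edges_def)
next
  case (insert a A)
  have "num_edges (insert a A) E = num_edges A E + degree A E a"
    using insert assms by (intro num_edges_insert) auto
  moreover have "degree A E a \<le> card A" unfolding degree_def using insert
    by (intro card_mono) auto
  ultimately show ?case using insert by simp
qed

definition tur :: "nat \<Rightarrow> nat \<Rightarrow> nat" where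
  "tur r m = (\<Sum>i<m. i - i div r)"

lemma tur_Suc: "tur r (Suc m) = tur r m + (m - m div r)"
  by (simp add: tur_def)

lemma tur_add: "tur r (a + s) = tur r a + (\<Sum>j<s. (a+j) - (a+j) div r)"
proof (induction s)
  case 0 then show ?case by simp
next
  case (Suc s)
  have "tur r (a + Suc s) = tur r (a+s) + ((a+s) - (a+s) div r)" by (simp add: tur_def)
  also have "\<dots> = tur r a + (\<Sum>j<s. (a+j) - (a+j) div r) + ((a+s) - (a+s) div r)" using Suc.IH by simp
  also have "\<dots> = tur r a + (\<Sum>j<Suc s. (a+j) - (a+j) div r)"
    using div_le_dividend[of "a+s" r] by (simp only: sum.lessThan_Suc)
  finally show ?case .
qed

lemma hermite: fixes a r :: nat assumes "0 < r" shows "(\<Sum>j<r. (a+j) div r) = a"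
proof (induction a)
  case 0
  have "(\<Sum>j<r. j div r) = (\<Sum>j<r. 0::nat)" by (intro sum.cong) auto
  then show ?case by simp
next
  case (Suc a)
  obtain k where k: "r = Suc k" using assms by (cases r) auto
  have "(\<Sum>j<Suc k. (a+j) div r) = a div r + (\<Sum>j<k. (a + Suc j) div r)"
    by (subst sum.lessThan_Suc_shift) simp
  moreover have "(\<Sum>j<Suc k. (Suc a+j) div r) = (\<Sum>j<k. (a + Suc j) div r) + (a + r) div r"
    using k by (simp add: sum.lessThan_Suc)
  moreover have "(a + r) div r = a div r + 1" using assms by simp
  ultimately show ?case using Suc k by simp
qed

lemma tur_step:
  assumes "0 < r" "s \<le> r"
  shows "tur r a + (\<Sum>j<s. j) + a * (s - 1) \<le> tur r (a + s)"
proof -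
  have le: "(\<Sum>j<s. (a+j) div r) \<le> a"
  proof -
    have "(\<Sum>j<s. (a+j) div r) \<le> (\<Sum>j<r. (a+j) div r)"
      using assms by (intro sum_mono2) auto
    then show ?thesis using hermite[OF assms(1)] by simp
  qed
  have "(\<Sum>j<s. (a+j) - (a+j) div r) = (\<Sum>j<s. a+j) - (\<Sum>j<s. (a+j) div r)"
    by (rule sum_subtractf_nat) simp
  also have "(\<Sum>j<s. a+j) = s * a + (\<Sum>j<s. j)" by (simp add: sum.distrib)
  finally have eq: "(\<Sum>j<s. (a+j) - (a+j) div r) = s * a + (\<Sum>j<s. j) - (\<Sum>j<s. (a+j) div r)" .
  show ?thesis
  proof (cases s)
    case 0 then show ?thesis by simp
  next
    case (Suc t)
    then show ?thesis unfolding tur_add eq using le by (simp add: algebra_simps)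
  qed
qed


lemma turan:
  assumes "1 \<le> r" and sym: "\<forall>x y. E x y \<longrightarrow> E y x" and irr: "\<forall>x. \<not> E x x"
    and "finite V" and "\<not> has_clique V E (r + 1)"
  shows "num_edges V E \<le> tur r (card V)"
  using assms(4,5)
proof (induction "card V" arbitrary: V rule: less_induct)
  case less
  show ?case
  proof (cases "V = {}")
    case True
    then show ?thesis by (simp add: num_edges_def edges_def)
  next
    case False
    define C where "C = {S. S \<subseteq> V \<and> (\<forall>x\<in>S. \<forall>y\<in>S. x \<noteq> y \<longrightarrow> E x y)}"
    have "C \<subseteq> Pow V" unfolding C_def by blast
    then have finC: "finite C" using less.prems(1) finite_subset by blast
    have "{} \<in> C" unfolding C_def by simp
    have "\<forall>S. S \<in> C \<longrightarrow> card S < card V + 1"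
    proof (intro allI impI)
      fix S assume "S \<in> C"
      then have "S \<subseteq> V" by (simp add: C_def)
      then have "card S \<le> card V" using card_mono less.prems(1) by blast
      then show "card S < card V + 1" by simp
    qed
    then obtain S where S: "S \<in> C" and Smax: "\<forall>S'\<in>C. card S' \<le> card S"
      using ex_has_greatest_nat[of "\<lambda>S. S \<in> C" "{}" card "card V + 1"] \<open>{} \<in> C\<close> by blast
    have SS: "S \<subseteq> V \<and> (\<forall>x\<in>S. \<forall>y\<in>S. x \<noteq> y \<longrightarrow> E x y)" using S unfolding C_def by simp
    then have SV: "S \<subseteq> V" by (rule conjunct1)
    from SS have Scl: "\<forall>x\<in>S. \<forall>y\<in>S. x \<noteq> y \<longrightarrow> E x y" by (rule conjunct2)
    have finS: "finite S" using SV less.prems(1) finite_subset by blast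
    have Sle: "card S \<le> r"
    proof (rule ccontr)
      assume "\<not> card S \<le> r"
      then have "r + 1 \<le> card S" by simp
      then obtain S' where S': "S' \<subseteq> S" "card S' = r + 1" "finite S'" by (rule obtain_subset_with_card_n)
      have "S' \<subseteq> V" using S'(1) SV by (rule subset_trans)
      moreover have "\<forall>x\<in>S'. \<forall>y\<in>S'. x \<noteq> y \<longrightarrow> E x y" using Scl S'(1) by blast
      ultimately have "has_clique V E (r+1)" unfolding has_clique_def using S'(2) by blast
      then show False using less.prems(2) by blast
    qed
    obtain v where "v \<in> V" using False by blast
    then have "{v} \<in> C" unfolding C_def by simp
    then have "card {v} \<le> card S" using Smax by blast
    then have Spos: "card S \<ge> 1" by simp
    define W where "W = V - S"
    have finW: "finite W" unfolding W_def using less.prems(1) by auto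
    have VWS: "V = S \<union> W" "S \<inter> W = {}" unfolding W_def using SV by auto
    have cardW: "card W = card V - card S" unfolding W_def using SV finS by (simp add: card_Diff_subset)
    have cardV: "card V = card W + card S" using VWS finS finW by (simp add: card_Un_disjoint)
    have ltW: "card W < card V" using cardV Spos by simp
    have Wcl: "\<not> has_clique W E (r + 1)"
    proof
      assume "has_clique W E (r + 1)"
      then obtain T where T: "T \<subseteq> W" "card T = r + 1" "\<forall>x\<in>T. \<forall>y\<in>T. x \<noteq> y \<longrightarrow> E x y"
        unfolding has_clique_def by blast
      have "W \<subseteq> V" unfolding W_def by blast
      with T(1) have "T \<subseteq> V" by (rule subset_trans)
      then have "has_clique V E (r + 1)" unfolding has_clique_def using T(2,3) by blast
      then show False using less.prems(2) by simp
    qed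
    have IH: "num_edges W E \<le> tur r (card W)"
      using less.hyps[OF ltW finW Wcl] .
    have degW: "degree S E w \<le> card S - 1" if w: "w \<in> W" for w
    proof -
      have "\<exists>x\<in>S. \<not> E w x"
      proof (rule ccontr)
        assume "\<not> (\<exists>x\<in>S. \<not> E w x)"
        then have all: "\<forall>x\<in>S. E w x" by blast
        have wV: "w \<in> V" using w W_def by blast
        have "\<forall>x\<in>insert w S. \<forall>y\<in>insert w S. x \<noteq> y \<longrightarrow> E x y"
          using all Scl sym by blast
        then have "insert w S \<in> C" unfolding C_def using SV wV by blast
        then have "card (insert w S) \<le> card S" using Smax by blast
        moreover have "w \<notin> S" using w W_def by auto
        ultimately show False using finS by simp
      qed
      then have "{u\<in>S. E w u} \<subset> S" by auto
      then have "card {u\<in>S. E w u} < card S" using finS psubset_card_mono by blast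
      then show ?thesis unfolding degree_def by simp
    qed
    have "num_edges V E = num_edges S E + num_edges W E + (\<Sum>w\<in>W. degree S E w)"
      using num_edges_Un[OF sym irr finS finW VWS(2)] VWS(1) by simp
    also have "\<dots> \<le> (\<Sum>j<card S. j) + tur r (card W) + card W * (card S - 1)"
    proof -
      have "(\<Sum>w\<in>W. degree S E w) \<le> (\<Sum>w\<in>W. card S - 1)" using degW by (intro sum_mono) auto
      then show ?thesis using IH num_edges_triv[OF sym irr finS] by simp
    qed
    also have "\<dots> \<le> tur r (card W + card S)"
      using tur_step[of r "card S" "card W"] Sle assms(1) by simp
    finally show ?thesis using cardV by simp
  qed
qed

lemma turan_num_ge: assumes "0 < r" shows "tur r n \<le> turan_num r n"
proof (induction n)
  case 0
  then show ?case by (simp add: tur_def)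
next
  case (Suc n)
  have symT: "\<forall>x y. turan_adj r x y \<longrightarrow> turan_adj r y x" and irrT: "\<forall>x. \<not> turan_adj r x x"
    unfolding turan_adj_def by auto
  have "turan_num r (Suc n) = turan_num r n + degree {0..<n} (turan_adj r) n"
    unfolding turan_num_def using num_edges_insert[OF symT irrT, of "{0..<n}" n]
    by (simp add: atLeast0_lessThan_Suc)
  moreover have "n - n div r \<le> degree {0..<n} (turan_adj r) n"
  proof -
    define Q where "Q = {u\<in>{0..<n}. u mod r = n mod r}"
    have "inj_on (\<lambda>u. u div r) Q"
    proof (rule inj_onI)
      fix x y assume "x \<in> Q" "y \<in> Q" "x div r = y div r"
      then have "x mod r = y mod r" "x div r = y div r" unfolding Q_def by auto
      then show "x = y" by (metis div_mult_mod_eq)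
    qed
    moreover have "(\<lambda>u. u div r) ` Q \<subseteq> {..<n div r}"
    proof
      fix z assume "z \<in> (\<lambda>u. u div r) ` Q"
      then obtain u where u: "u < n" "u mod r = n mod r" "z = u div r" unfolding Q_def by auto
      have "u div r * r + u mod r < n div r * r + n mod r" using u(1) by simp
      then have "u div r * r < n div r * r" using u(2) by linarith
      then have "u div r < n div r" using mult_less_cancel2 by blast
      then show "z \<in> {..<n div r}" using u by simp
    qed
    ultimately have cQ: "card Q \<le> n div r"
    proof -
      assume a: "inj_on (\<lambda>u. u div r) Q" "(\<lambda>u. u div r) ` Q \<subseteq> {..<n div r}"
      have "card Q = card ((\<lambda>u. u div r) ` Q)" using a(1) by (simp add: card_image)
      also have "\<dots> \<le> card {..<n div r}" using a(2) by (intro card_mono) auto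
      finally show ?thesis by simp
    qed
    have "{u\<in>{0..<n}. turan_adj r n u} = {0..<n} - Q" unfolding Q_def turan_adj_def by auto
    moreover have "Q \<subseteq> {0..<n}" "finite Q" unfolding Q_def by auto
    moreover have "card ({0..<n} - Q) = n - card Q" using calculation(2,3) by (simp add: card_Diff_subset)
    ultimately have "degree {0..<n} (turan_adj r) n = n - card Q"
      unfolding degree_def by simp
    then show ?thesis using cQ by simp
  qed
  ultimately show ?case using Suc by (simp add: tur_Suc)
qed

lemma tur_lower: assumes "0 < r" shows "real (tur r n) \<ge> (real r - 1) / (2 * real r) * (real n ^ 2 - real n)"
proof (induction n)
  case 0
  then show ?case by (simp add: tur_def)
next
  case (Suc n)
  have "n div r * r \<le> n" by (metis div_mult_mod_eq le_add1)
  then have "real (n div r) * real r \<le> real n" by (metis of_nat_le_iff of_nat_mult)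
  then have "real (n div r) \<le> real n / real r" using assms by (simp add: pos_le_divide_eq)
  then have "real (n - n div r) \<ge> real n - real n / real r" by (simp add: div_le_dividend of_nat_diff)
  moreover have "(real r - 1) / (2 * real r) * (real (Suc n) ^ 2 - real (Suc n))
     = (real r - 1) / (2 * real r) * (real n ^ 2 - real n) + (real n - real n / real r)"
    using assms by (simp add: field_simps power2_eq_square)
  ultimately show ?case using Suc by (simp add: tur_Suc)
qed


lemma arith_q:
  fixes N q :: real
  assumes q: "q \<ge> 4" and N: "N > q^4"
  shows "-N/2 + (N/q-1)*(N/q^2-1/2) > (N*(q-1)/q+1)^2/(q^2*(q-1))"
proof -
  have q0: "q > 0" "q - 1 > 0" using q by auto
  have N0: "N > 0" using N q0 by (smt (verit) zero_less_power)
  have h1: "q^4 \<ge> q^3 + 2*q^2 + 4*q"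
  proof -
    have "q^3 \<ge> 4*q^2" using q q0 by (simp add: power3_eq_cube power2_eq_square)
    moreover have "q^2 \<ge> 4 * q" using q q0 by (simp add: power2_eq_square)
    moreover have "q \<ge> 4" using q .
    ultimately have "q^3 \<ge> q^2 + 2*q + 4" by (smt (verit) mult_left_mono)
    then have "q * q^3 \<ge> q * (q^2 + 2*q + 4)" using q0 by (intro mult_left_mono) auto
    then show ?thesis by (simp add: algebra_simps power2_eq_square power3_eq_cube power4_eq_xxxx)
  qed
  have h2: "N^2 * (q-1) > N * q^4 * (q-1)"
    using N N0 q0 by (simp add: power2_eq_square)
  have h3: "N*(q-1)*q^4 \<ge> N*(q-1)*(q^3 + 2*q^2 + 4*q)"
    using h1 N0 q0 by (intro mult_left_mono) auto
  have h4: "q^4*(q-1) - 2*q^2 > 0"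
  proof -
    have "q^2 * (q^2*(q-1) - 2) > 0" using q q0
      by (intro mult_pos_pos) (auto simp: power2_eq_square, smt (verit) mult_less_cancel_right2 mult_mono)
    then show ?thesis by (simp add: algebra_simps power2_eq_square power4_eq_xxxx)
  qed
  have key: "2*N^2*(q-1) - N*(q-1)*(q^4+q^3+2*q^2+4*q) + q^4*(q-1) - 2*q^2 > 0"
    using h2 h3 h4 by (simp add: algebra_simps)
  have eq: "(-N/2 + (N/q-1)*(N/q^2-1/2)) - (N*(q-1)/q+1)^2/(q^2*(q-1))
     = (2*N^2*(q-1) - N*(q-1)*(q^4+q^3+2*q^2+4*q) + q^4*(q-1) - 2*q^2) / (2*q^4*(q-1))"
    using q0 by (simp add: field_simps) (simp add: algebra_simps power_numeral_reduce)
  have "(2*N^2*(q-1) - N*(q-1)*(q^4+q^3+2*q^2+4*q) + q^4*(q-1) - 2*q^2) / (2*q^4*(q-1)) > 0"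
    using key q0 by (intro divide_pos_pos) auto
  then show ?thesis using eq by linarith
qed


theorem theorem6:
  fixes r n :: nat and V :: "'a set" and E :: "'a \<Rightarrow> 'a \<Rightarrow> bool"
  assumes "r \<ge> 2" and "real n > real r ^ 8"
    and "simple_graph V E" and "card V = n"
    and "num_edges V E > turan_num r n"
  shows "\<exists>U \<subseteq> V. real (card U) > (1 - 1 / real r ^ 2) * real n \<and>
           ((has_clique U E (r + 1) \<and>
             real (min_degree U E) >
               ((real r - 1) / real r - 1 / (real r ^ 2 * (real r ^ 2 - 1))) * real (card U))
            \<or> real (num_edges U E) >
               ((real r - 1) / (2 * real r) + 1 / (real r ^ 4 * (real r ^ 2 - 1))) * real (card U) ^ 2)"
proof -
  have finV: "finite V" and sym: "\<forall>x y. E x y \<longrightarrow> E y x" and irr: "\<forall>x. \<not> E x x"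
    using assms(3) unfolding simple_graph_def by auto
  define R where "R = real r"
  define N where "N = real n"
  define c where "c = (R - 1) / (2 * R)"
  define \<beta> where "\<beta> = 1 / (R^2 * (R^2 - 1))"
  define \<gamma> where "\<gamma> = 1 / (R^4 * (R^2 - 1))"
  define L where "L = (1 - 1 / R^2) * N"
  define P where "P U \<longleftrightarrow> real (card U) > (1 - 1 / real r ^ 2) * real n \<and>
           ((has_clique U E (r + 1) \<and>
             real (min_degree U E) >
               ((real r - 1) / real r - 1 / (real r ^ 2 * (real r ^ 2 - 1))) * real (card U))
            \<or> real (num_edges U E) >
               ((real r - 1) / (2 * real r) + 1 / (real r ^ 4 * (real r ^ 2 - 1))) * real (card U) ^ 2)"
    for U
  have R2: "R \<ge> 2" using assms(1) unfolding R_def by simp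
  have r0: "0 < r" using assms(1) by simp
  have NR: "N > R^8" using assms(2) unfolding N_def R_def by simp
  have q4: "R^2 \<ge> 4"
  proof -
    have "2*2 \<le> R*R" using R2 by (intro mult_mono) auto
    then show ?thesis by (simp add: power2_eq_square)
  qed
  have R21: "R^2 - 1 > 0" using q4 by simp
  have R0: "R > 0" using R2 by simp
  have "R^8 > 0" using R0 by simp
  then have N0: "N > 0" using NR by linarith
  have R44: "R^4 = R^2 * R^2" by (simp add: power4_eq_xxxx power2_eq_square)
  have Pdef2: "P U \<longleftrightarrow> real (card U) > L \<and>
           ((has_clique U E (r + 1) \<and> real (min_degree U E) > (2 * c - \<beta>) * real (card U))
            \<or> real (num_edges U E) > (c + \<gamma>) * real (card U) ^ 2)" for U
  proof -
    have "(real r - 1) / real r = 2 * c" unfolding c_def R_def using R0 R_def by (simp add: field_simps)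
    then show ?thesis unfolding P_def L_def N_def c_def \<beta>_def \<gamma>_def R_def by simp
  qed
  have bL: "\<beta> * L = N / R^4"
    unfolding \<beta>_def L_def using R0 R21 by (simp add: field_simps R44 power2_eq_square)
  have c0: "0 \<le> c" "c \<le> 1/2" unfolding c_def using R2 by (auto simp: field_simps)
  have b0: "\<beta> > 0" unfolding \<beta>_def using R21 R0 by simp
  have NR4: "N / R^4 > R^4"
  proof -
    have "R^4 * R^4 < N" using NR by (simp flip: power_add)
    then show ?thesis using R0 by (simp add: pos_less_divide_eq)
  qed
  have R4: "R^4 \<ge> 16"
  proof -
    have "4*4 \<le> R^2*R^2" using q4 by (intro mult_mono) auto
    then show ?thesis using R44 by linarith
  qed
  have bLbig: "\<beta> * L \<ge> 1" "\<beta> * L \<ge> c" using bL NR4 R4 c0 by linarith+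
  have LN: "L = N - N / R^2" unfolding L_def by (simp add: algebra_simps)
  have NR2: "N * 1 < N * R^2" using q4 N0 by (intro mult_strict_left_mono) auto
  have R2p: "R^2 > 0" using q4 by linarith
  have "N / R^2 < N" using NR2 R2p by (simp add: divide_less_eq)
  moreover have "N / R^2 > 0" using N0 R2p by simp
  ultimately have L0: "0 < L" "L < N" unfolding LN by linarith+
  have termi: "- c * N + (N - m) * (\<beta> * L - c) > \<gamma> * m^2" if m: "L < m" "m \<le> L + 1" for m
  proof -
    define q where "q = R^2"
    have qq: "q \<ge> 4" "N > q^4" using q4 NR unfolding q_def by (auto simp flip: power_mult)
    have q0: "q > 0" "q - 1 > 0" using qq by auto
    have Lq: "L = N*(q-1)/q" unfolding L_def q_def using q0 q_def by (simp add: field_simps)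
    have bLq: "\<beta> * L = N / q^2" unfolding bL q_def by (simp flip: power_mult)
    have gq: "\<gamma> = 1 / (q^2 * (q-1))" unfolding \<gamma>_def q_def by (simp flip: power_mult)
    have m0: "m > 0" using m L0 by simp
    have Nm: "N - m \<ge> N/q - 1" using m Lq q0 by (simp add: field_simps)
    have Nq: "N/q - 1 \<ge> 0"
    proof -
      have "q^4 \<ge> q" using qq by (intro self_le_power) auto
      then have "N \<ge> q" using qq by simp
      then show ?thesis using q0 by (simp add: field_simps)
    qed
    have bc: "\<beta> * L - c \<ge> N/q^2 - 1/2" using bLq c0 by simp
    have bc0: "N/q^2 - 1/2 \<ge> 0" using bLbig(1) bLq by linarith
    have "(N - m) * (\<beta> * L - c) \<ge> (N/q - 1) * (N/q^2 - 1/2)"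
      using Nm bc Nq bc0 by (intro mult_mono) auto
    moreover have "- c * N \<ge> -N/2" using c0 N0 by simp
    moreover have "\<gamma> * m^2 \<le> (N*(q-1)/q+1)^2/(q^2*(q-1))"
    proof -
      have "m^2 \<le> (L+1)^2" using m m0 by (intro power_mono) auto
      then show ?thesis unfolding gq Lq using q0 by (simp add: divide_right_mono)
    qed
    ultimately show ?thesis using arith_q[OF qq] by linarith
  qed
  have key: "\<And>U. U \<subseteq> V \<Longrightarrow> card U = m \<Longrightarrow> real m > L \<Longrightarrow> num_edges U E > tur r m \<Longrightarrow>
     real (num_edges U E) - c * real m^2 \<ge> - c * N + (N - real m) * (\<beta> * L - c) \<Longrightarrow> \<exists>U'\<subseteq>U. P U'" for m
  proof (induction m)
    case 0
    then show ?case using L0 by simp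
  next
    case (Suc m)
    fix U assume UV: "U \<subseteq> V" and cU: "card U = Suc m" and mL: "real (Suc m) > L"
      and eT: "num_edges U E > tur r (Suc m)"
      and inv: "real (num_edges U E) - c * real (Suc m)^2 \<ge> - c * N + (N - real (Suc m)) * (\<beta> * L - c)"
    have finU: "finite U" using UV finV finite_subset by blast
    show "\<exists>U'\<subseteq>U. P U'"
    proof (cases "real (num_edges U E) > (c + \<gamma>) * real (Suc m)^2")
      case True
      then have "P U" unfolding Pdef2 using cU mL by simp
      then show ?thesis by blast
    next
      case dense: False
      show ?thesis
      proof (cases "\<exists>v\<in>U. real (degree U E v) \<le> (2 * c - \<beta>) * real (Suc m)")
        case False
        have Une: "U \<noteq> {}" using cU by auto
        have "min_degree U E \<in> degree U E ` U" unfolding min_degree_def using finU Une by simp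
        then have md: "real (min_degree U E) > (2 * c - \<beta>) * real (Suc m)" using False by auto
        have "has_clique U E (r+1)"
        proof (rule ccontr)
          assume "\<not> has_clique U E (r+1)"
          then have "num_edges U E \<le> tur r (card U)" using turan[OF _ sym irr finU] r0 by simp
          then show False using eT cU by simp
        qed
        then have "P U" unfolding Pdef2 using cU mL md by simp
        then show ?thesis by blast
      next
        case True
        then obtain v where vU: "v \<in> U" and dv: "real (degree U E v) \<le> (2 * c - \<beta>) * real (Suc m)" by blast
        define U' where "U' = U - {v}"
        have U'sub: "U' \<subseteq> U" "U' \<subseteq> V" unfolding U'_def using UV by auto
        have cU': "card U' = m" unfolding U'_def using cU vU finU by simp
        have UU': "U = insert v U'" "v \<notin> U'" unfolding U'_def using vU by auto
        have finU': "finite U'" using finU U'sub finite_subset by blast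
        have eU: "num_edges U E = num_edges U' E + degree U' E v"
          using UU' num_edges_insert[OF sym irr finU' UU'(2)] by simp
        have dd: "degree U E v = degree U' E v"
        proof -
          have "{u\<in>U. E v u} = {u\<in>U'. E v u}" using UU' irr by auto
          then show ?thesis unfolding degree_def by simp
        qed
        have mL': "real m > L"
        proof (rule ccontr)
          assume "\<not> real m > L"
          then have "real (Suc m) \<le> L + 1" by simp
          from termi[OF mL this] inv have "real (num_edges U E) > (c + \<gamma>) * real (Suc m)^2"
            by (simp add: algebra_simps)
          then show False using dense by simp
        qed
        have bm: "\<beta> * real (Suc m) \<ge> \<beta> * L" using mL b0 by simp
        have dle: "degree U' E v \<le> m - m div r"
        proof -
          have "real (m div r) \<le> real m / R"
          proof -
            have "m div r * r \<le> m" by (metis div_mult_mod_eq le_add1)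
            then have "real (m div r) * R \<le> real m" unfolding R_def by (metis of_nat_le_iff of_nat_mult)
            then show ?thesis using R0 by (simp add: pos_le_divide_eq)
          qed
          then have h1: "real (m - m div r) \<ge> real m - real m / R" by (simp add: div_le_dividend of_nat_diff)
          have "2 * c = (R - 1) / R" unfolding c_def using R0 by (simp add: field_simps)
          then have e1: "(2 * c - \<beta>) * real (Suc m) = (R - 1) / R * (real m + 1) - \<beta> * real (Suc m)"
            by (simp add: algebra_simps)
          have e2: "(R - 1) / R * (real m + 1) = (real m - real m / R) + (R-1)/R"
            using R0 by (simp add: field_simps)
          from e1 e2 have "(2 * c - \<beta>) * real (Suc m) = (real m - real m / R) + ((R-1)/R - \<beta> * real (Suc m))"
            by linarith
          moreover have "(R-1)/R \<le> 1" using R0 by simp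
          ultimately have "(2 * c - \<beta>) * real (Suc m) \<le> real m - real m / R" using bm bLbig by linarith
          then have "real (degree U' E v) \<le> real (m - m div r)" using dv dd h1 by linarith
          then show ?thesis by simp
        qed
        have eT': "num_edges U' E > tur r m"
          using eT eU dle div_le_dividend[of m r] unfolding tur_Suc by arith
        have inv': "real (num_edges U' E) - c * real m^2 \<ge> - c * N + (N - real m) * (\<beta> * L - c)"
        proof -
          have "real (num_edges U' E) = real (num_edges U E) - real (degree U E v)" using eU dd by simp
          then show ?thesis using inv dv bm by (simp add: algebra_simps power2_eq_square)
        qed
        from Suc.IH[OF U'sub(2) cU' mL' eT' inv'] U'sub(1) show ?thesis by blast
      qed
    qed
  qed
  have "\<exists>U'\<subseteq>V. P U'"
  proof (rule key[of V n])
    show "V \<subseteq> V" by simp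
    show "card V = n" using assms(4) .
    show "real n > L" using L0 unfolding N_def by simp
    show "num_edges V E > tur r n" using assms(5) turan_num_ge[OF r0, of n] by simp
    have "real (tur r n) \<ge> c * (N^2 - N)" using tur_lower[OF r0, of n] unfolding c_def R_def N_def by simp
    moreover have "real (num_edges V E) \<ge> real (tur r n)" using assms(5) turan_num_ge[OF r0, of n] by simp
    ultimately show "real (num_edges V E) - c * real n^2 \<ge> - c * N + (N - real n) * (\<beta> * L - c)"
      unfolding N_def by (simp add: algebra_simps)
  qed
  then show ?thesis unfolding P_def by blast
qed

end
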